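(* Let $G$ be a finite simple graph with $V(G)=\{1,\dots,n\}$, vertex weight function $w_1$, and an edge weight function $w$ taking only positive real values. Then $G$ is a forest if and only if $\phi_{(w,w_1)}(G,x)=\eta_{(w,w_1)}(G,x)$.
   Context: A vertex weight function $w_1$ assigns a real number (possibly $0$) to each vertex; induced subgraphs carry restricted weights. For $A\subseteq E(G)$, $w(A)=\prod_{e\in A}w(e)$. $\mu_w(G,x)=\sum_{M}(-1)^{|M|}|w(M)|^2x^{n-2|M|}$ over all matchings $M$ (including empty). $\eta_{(w,w_1)}(G,x)=\sum_{S\subseteq V(G)}(-1)^{|V(G)\setminus S|}\big(\prod_{v\in V(G)\setminus S}w_1(v)\big)\mu_w(G[S],x)$ with $G[S]$ the induced subgraph and $\mu_w$ of the empty graph equal to $1$. The weighted adjacency matrix $B=[b_{uv}]$ has $b_{uv}=w(e_{uv})$ if $uv$ is an edge and $u<v$, $b_{uu}=w_1(u)$, $b_{uv}=\overline{w(e_{vu})}$ if $vu$ is an edge and $u>v$, and $0$ otherwise; $\phi_{(w,w_1)}(G,x)=\det(xI-B)$. *)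

theory Defs
  imports "Jordan_Normal_Form.Char_Poly"
begin

definition simple_graph :: "nat \<Rightarrow> nat set set \<Rightarrow> bool" where
  "simple_graph n E \<longleftrightarrow> (\<forall>e\<in>E. e \<subseteq> {1..n} \<and> card e = 2)"

definition is_cycle :: "nat \<Rightarrow> nat set set \<Rightarrow> nat list \<Rightarrow> bool" where
  "is_cycle n E vs \<longleftrightarrow> length vs \<ge> 3 \<and> distinct vs \<and> set vs \<subseteq> {1..n} \<and>
     (\<forall>i < length vs. {vs ! i, vs ! ((i + 1) mod length vs)} \<in> E)"

definition is_forest :: "nat \<Rightarrow> nat set set \<Rightarrow> bool" where
  "is_forest n E \<longleftrightarrow> \<not> (\<exists>vs. is_cycle n E vs)"

definition induced_edges :: "nat set set \<Rightarrow> nat set \<Rightarrow> nat set set" where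
  "induced_edges E S = {e \<in> E. e \<subseteq> S}"

definition is_matching :: "nat set set \<Rightarrow> nat set set \<Rightarrow> bool" where
  "is_matching F M \<longleftrightarrow> M \<subseteq> F \<and> (\<forall>e\<in>M. \<forall>f\<in>M. e \<noteq> f \<longrightarrow> e \<inter> f = {})"

definition mu_poly :: "nat set set \<Rightarrow> (nat set \<Rightarrow> real) \<Rightarrow> nat set \<Rightarrow> real poly" where
  "mu_poly E w S = (\<Sum>M \<in> {M. is_matching (induced_edges E S) M}.
      monom ((-1) ^ card M * \<bar>\<Prod>e\<in>M. w e\<bar> ^ 2) (card S - 2 * card M))"

definition eta_poly :: "nat \<Rightarrow> nat set set \<Rightarrow> (nat set \<Rightarrow> real) \<Rightarrow> (nat \<Rightarrow> real) \<Rightarrow> real poly" where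
  "eta_poly n E w w1 = (\<Sum>S \<in> Pow {1..n}.
      Polynomial.smult ((-1) ^ card ({1..n} - S) * (\<Prod>v \<in> {1..n} - S. w1 v)) (mu_poly E w S))"

text \<open>Weighted adjacency matrix; row/column index i (0-based) corresponds to vertex i+1.
  Edge weights are real here, so the conjugate below the diagonal equals the weight itself.\<close>
definition wadj_mat :: "nat \<Rightarrow> nat set set \<Rightarrow> (nat set \<Rightarrow> real) \<Rightarrow> (nat \<Rightarrow> real) \<Rightarrow> real mat" where
  "wadj_mat n E w w1 = mat n n (\<lambda>(i, j).
      if i = j then w1 (i + 1)
      else if {i + 1, j + 1} \<in> E then w {i + 1, j + 1} else 0)"

definition phi_poly :: "nat \<Rightarrow> nat set set \<Rightarrow> (nat set \<Rightarrow> real) \<Rightarrow> (nat \<Rightarrow> real) \<Rightarrow> real poly" where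
  "phi_poly n E w w1 = char_poly (wadj_mat n E w w1)"

end

theory Submission imports Defs "HOL-Combinatorics.Cycles" begin

lemma sign_cycle_of_list:
  "distinct cs \<Longrightarrow> cs \<noteq> [] \<Longrightarrow> sign (cycle_of_list cs) = (-1) ^ (length cs - 1)"
proof (induction cs rule: cycle_of_list.induct)
  case (1 i j cs)
  have "sign (cycle_of_list (i # j # cs)) = sign (transpose i j) * sign (cycle_of_list (j # cs))"
    by (simp add: sign_compose permutation_swap_id permutation_of_cycle)
  also have "\<dots> = - ((-1) ^ (length (j#cs) - 1))" using 1 by (simp add: sign_swap_id)
  finally show ?case by (simp add: o_def)
qed auto

lemma invol_bij: "(\<forall>x. p (p x) = x) \<Longrightarrow> bij p"
  by (metis bijI' )

lemma sign_invol:
  assumes "finite {x. p x \<noteq> x}" "\<forall>x. p (p x) = x"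
  shows "sign p = (-1) ^ (card {x. p x \<noteq> x} div 2) \<and> even (card {x. p x \<noteq> x})"
  using assms
proof (induction "card {x. p x \<noteq> x}" arbitrary: p rule: less_induct)
  case less
  show ?case
  proof (cases "{x. p x \<noteq> x} = {}")
    case True
    then have "p = id" by auto
    then show ?thesis using True by simp
  next
    case False
    then obtain a where a: "p a \<noteq> a" by auto
    define b where "b = p a"
    have pb: "p b = a" using less.prems b_def by auto
    define q where "q = transpose a b \<circ> p"
    have qa: "q x = (if x = a \<or> x = b then x else p x)" for x
      using less.prems a pb b_def unfolding q_def
      by (auto simp: transpose_def) (metis)+
    have Mq: "{x. q x \<noteq> x} = {x. p x \<noteq> x} - {a, b}"
      using qa a pb b_def by auto
    have ab: "a \<in> {x. p x \<noteq> x}" "b \<in> {x. p x \<noteq> x}" "a \<noteq> b" using a pb b_def by auto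
    have cardq: "card {x. q x \<noteq> x} = card {x. p x \<noteq> x} - 2"
      unfolding Mq using ab less.prems(1) by (simp add: card_Diff_subset)
    have cardp: "card {x. p x \<noteq> x} \<ge> 2"
      using ab less.prems(1)
      by (metis (no_types, lifting) card_2_iff card_mono empty_subsetI insert_subset)
    have fq: "finite {x. q x \<noteq> x}" unfolding Mq using less.prems(1) by simp
    have iq: "\<forall>x. q (q x) = x" using qa less.prems(2) by (metis a b_def pb)
    have IH: "sign q = (-1) ^ (card {x. q x \<noteq> x} div 2) \<and> even (card {x. q x \<noteq> x})"
      using less.hyps[OF _ fq iq] cardq cardp by simp
    have pq: "p = transpose a b \<circ> q" unfolding q_def by (simp add: fun_eq_iff)
    have permq: "permutation q" using fq iq invol_bij
      by (simp add: permutation)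
    have "sign p = - sign q" unfolding pq
      by (simp add: sign_compose permutation_swap_id permq sign_swap_id ab)
    moreover have "card {x. p x \<noteq> x} div 2 = Suc (card {x. q x \<noteq> x} div 2)"
      using cardq cardp IH by presburger
    ultimately show ?thesis using IH cardq cardp by auto
  qed
qed


definition cpe :: "nat set set \<Rightarrow> (nat set \<Rightarrow> real) \<Rightarrow> (nat \<Rightarrow> real) \<Rightarrow> nat \<Rightarrow> nat \<Rightarrow> real poly" where
  "cpe E w w1 i j = (if i = j then [:-w1(i+1), 1:] else [:-(if {i+1,j+1} \<in> E then w {i+1,j+1} else 0):])"

definition tm :: "nat \<Rightarrow> nat set set \<Rightarrow> (nat set \<Rightarrow> real) \<Rightarrow> (nat \<Rightarrow> real) \<Rightarrow> (nat \<Rightarrow> nat) \<Rightarrow> real poly" where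
  "tm n E w w1 p = of_int (sign p) * (\<Prod>i=0..<n. cpe E w w1 i (p i))"

lemma wadj_dim: "dim_row (wadj_mat n E w w1) = n" "dim_col (wadj_mat n E w w1) = n"
  by (simp_all add: wadj_mat_def)

lemma wadj_idx: "i < n \<Longrightarrow> j < n \<Longrightarrow> wadj_mat n E w w1 $$ (i,j) = (if i = j then w1 (i + 1)
      else if {i + 1, j + 1} \<in> E then w {i + 1, j + 1} else 0)"
  by (simp add: wadj_mat_def)

lemma cpm_idx: assumes "i < n" "j < n"
  shows "char_poly_matrix (wadj_mat n E w w1) $$ (i, j) = cpe E w w1 i j"
proof -
  have "char_poly_matrix (wadj_mat n E w w1) $$ (i, j) = [:0,1:] * (if i = j then 1 else 0) + [:- (wadj_mat n E w w1 $$ (i,j)):]"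
    unfolding char_poly_matrix_def using assms
    by (simp only: wadj_dim index_add_mat index_smult_mat index_one_mat index_map_mat)
  also have "\<dots> = cpe E w w1 i j"
    using assms unfolding cpe_def wadj_idx[OF assms]
    by (cases "i = j") simp_all
  finally show ?thesis .
qed

lemma phi_sum: "phi_poly n E w w1 = (\<Sum>p | p permutes {0..<n}. tm n E w w1 p)"
proof -
  have C: "char_poly_matrix (wadj_mat n E w w1) \<in> carrier_mat n n"
    by (rule char_poly_matrix_closed) (rule carrier_matI[OF wadj_dim])
  show ?thesis
    unfolding phi_poly_def char_poly_def det_def'[OF C] tm_def
  proof (rule sum.cong[OF refl])
    fix p assume "p \<in> {p. p permutes {0..<n}}"
    then have pp: "p permutes {0..<n}" by simp
    have "p i < n" if "i < n" for i
      using permutes_in_image[OF pp, of i] that by simp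
    then show "of_int (sign p) * (\<Prod>i = 0..<n. char_poly_matrix (wadj_mat n E w w1) $$ (i, p i)) =
          of_int (sign p) * (\<Prod>i = 0..<n. cpe E w w1 i (p i))"
      by (intro arg_cong2[where f="(*)"] refl prod.cong) (simp_all add: cpm_idx)
  qed
qed

definition adm :: "nat \<Rightarrow> nat set set \<Rightarrow> (nat \<Rightarrow> nat) \<Rightarrow> bool" where
  "adm n E p \<longleftrightarrow> (\<forall>i<n. p i \<noteq> i \<longrightarrow> {i+1, p i+1} \<in> E)"

lemma tm_nonadm: "\<not> adm n E p \<Longrightarrow> tm n E w w1 p = 0"
  unfolding adm_def tm_def
  by (auto intro!: prod_zero simp: cpe_def)

lemma tm_adm:
  assumes "adm n E p"
  shows "tm n E w w1 p = Polynomial.smult (of_int (sign p) * (\<Prod>i\<in>{i. i < n \<and> p i \<noteq> i}. - w {i+1, p i+1}))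
            (\<Prod>i\<in>{i. i < n \<and> p i = i}. [:-w1(i+1), 1:])"
proof -
  have "(\<Prod>i=0..<n. cpe E w w1 i (p i)) = (\<Prod>i=0..<n. if p i = i then [:-w1(i+1), 1:] else [: - w {i+1, p i+1}:])"
    using assms unfolding adm_def cpe_def by (intro prod.cong) auto
  also have "\<dots> = (\<Prod>i\<in>{i. i < n \<and> p i = i}. [:-w1(i+1), 1:]) * (\<Prod>i\<in>{i. i < n \<and> p i \<noteq> i}. [: - w {i+1, p i+1}:])"
    by (subst prod.If_cases) (auto intro!: arg_cong2[where f="(*)"] prod.cong)
  finally have "(\<Prod>i=0..<n. cpe E w w1 i (p i)) = (\<Prod>i\<in>{i. i < n \<and> p i = i}. [:-w1(i+1), 1:]) * [:\<Prod>i\<in>{i. i < n \<and> p i \<noteq> i}. - w {i+1, p i+1}:]"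
    by (simp add: prod_to_poly)
  then show ?thesis unfolding tm_def
    by (simp add: of_int_poly mult.commute)
qed


lemma prod_neg: "(\<Prod>x\<in>A. - f x) = (-1) ^ card A * prod f A" for f :: "'b \<Rightarrow> 'a::comm_ring_1"
proof -
  have "(\<Prod>x\<in>A. - f x) = (\<Prod>x\<in>A. (-1) * f x)" by simp
  also have "\<dots> = (\<Prod>x\<in>A. (-1)) * prod f A" by (rule prod.distrib)
  also have "\<dots> = (-1) ^ card A * prod f A" by simp
  finally show ?thesis .
qed

lemma prod_linear_expand:
  fixes c :: "'a \<Rightarrow> real"
  assumes "finite A"
  shows "(\<Prod>v\<in>A. [:-c v, 1:]) = (\<Sum>T\<in>Pow A. monom ((-1) ^ card (A - T) * (\<Prod>v\<in>A - T. c v)) (card T))"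
proof -
  have "(\<Prod>v\<in>A. [:-c v, 1:]) = (\<Prod>v\<in>A. monom 1 1 + [:-c v:])"
    by (intro prod.cong) (auto simp: monom_altdef)
  also have "\<dots> = (\<Sum>T\<in>Pow A. prod (\<lambda>_. monom 1 1) T * prod (\<lambda>v. [:-c v:]) (A - T))"
    by (rule prod_add[OF assms])
  also have "\<dots> = (\<Sum>T\<in>Pow A. monom ((-1) ^ card (A - T) * (\<Prod>v\<in>A - T. c v)) (card T))"
  proof (intro sum.cong refl)
    fix T assume "T \<in> Pow A"
    have "prod (\<lambda>_. monom 1 1) T = (monom 1 (card T) :: real poly)" by (simp add: monom_power)
    moreover have "prod (\<lambda>v. [:-c v:]) (A - T) = [:(-1) ^ card (A - T) * (\<Prod>v\<in>A - T. c v):]"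
      using prod_neg[of c "A - T"] by (simp add: prod_to_poly)
    ultimately show "prod (\<lambda>_. monom 1 1) T * prod (\<lambda>v. [:-c v:]) (A - T) = monom ((-1) ^ card (A - T) * (\<Prod>v\<in>A - T. c v)) (card T)"
      by (simp add: mult.commute smult_monom)
  qed
  finally show ?thesis .
qed


lemma matching_induced:
  "is_matching (induced_edges E S) M \<longleftrightarrow> is_matching E M \<and> \<Union>M \<subseteq> S"
  unfolding is_matching_def induced_edges_def by auto

lemma matching_card_Union:
  assumes "simple_graph n E" "is_matching E M"
  shows "card (\<Union>M) = 2 * card M" "\<Union>M \<subseteq> {1..n}" "finite M"
proof -
  have ME: "M \<subseteq> E" and dj: "\<forall>e\<in>M. \<forall>f\<in>M. e \<noteq> f \<longrightarrow> e \<inter> f = {}"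
    using assms(2) unfolding is_matching_def by auto
  have c2: "\<forall>e\<in>M. e \<subseteq> {1..n} \<and> card e = 2" using assms(1) ME unfolding simple_graph_def by auto
  show "\<Union>M \<subseteq> {1..n}" using c2 by auto
  then have "finite (\<Union>M)" using finite_subset by blast
  then show fM: "finite M" using finite_UnionD by blast
  have finA: "\<forall>A\<in>M. finite A" using c2 by (metis card.infinite zero_neq_numeral)
  have "card (\<Union>M) = sum card M"
    by (rule card_Union_disjoint) (use dj finA in \<open>auto simp: disjnt_def pairwise_def\<close>)
  also have "\<dots> = sum (\<lambda>_. 2) M" using c2 by (intro sum.cong) auto
  finally show "card (\<Union>M) = 2 * card M" by simp
qed

lemma eta_matchings:
  assumes sg: "simple_graph n E"
  shows "eta_poly n E w w1 = (\<Sum>M | is_matching E M.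
     Polynomial.smult ((-1) ^ card M * \<bar>\<Prod>e\<in>M. w e\<bar> ^ 2) (\<Prod>v\<in>{1..n} - \<Union>M. [:-w1 v, 1:]))"
proof -
  define V1 where "V1 = {1..n::nat}"
  define c where "c S = (-1) ^ card (V1 - S) * (\<Prod>v\<in>V1 - S. w1 v)" for S
  define d where "d M = (-1) ^ card M * \<bar>\<Prod>e\<in>M. w e\<bar> ^ 2" for M :: "nat set set"
  define g where "g S M = monom (c S * d M) (card S - 2 * card M)" for S M
  have finE: "finite E"
  proof -
    have "E \<subseteq> Pow {1..n}" using sg unfolding simple_graph_def by auto
    then show ?thesis using finite_subset by blast
  qed
  have mset: "{M. is_matching (induced_edges E S) M} = {M \<in> Pow E. is_matching (induced_edges E S) M}" for S
    unfolding is_matching_def induced_edges_def by auto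
  have "eta_poly n E w w1 = (\<Sum>S\<in>Pow V1. \<Sum>M\<in>{M \<in> Pow E. is_matching (induced_edges E S) M}. g S M)"
    unfolding eta_poly_def mu_poly_def V1_def[symmetric] c_def[symmetric] g_def d_def
    by (simp add: smult_sum2 smult_monom mset)
  also have "\<dots> = (\<Sum>M\<in>Pow E. \<Sum>S | S \<in> Pow V1 \<and> is_matching (induced_edges E S) M. g S M)"
    by (rule sum.swap_restrict) (auto simp: V1_def finE)
  also have "\<dots> = (\<Sum>M\<in>Pow E. if is_matching E M then (\<Sum>S | S \<in> Pow V1 \<and> \<Union>M \<subseteq> S. g S M) else 0)"
    by (intro sum.cong refl) (auto simp: matching_induced)
  also have "\<dots> = (\<Sum>M \<in> {M \<in> Pow E. is_matching E M}. (\<Sum>S | S \<in> Pow V1 \<and> \<Union>M \<subseteq> S. g S M))"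
    by (rule sum.inter_filter[symmetric]) (simp add: finE)
  also have "\<dots> = (\<Sum>M | is_matching E M. Polynomial.smult (d M) (\<Prod>v\<in>V1 - \<Union>M. [:-w1 v, 1:]))"
  proof (rule sum.cong)
    show "{M \<in> Pow E. is_matching E M} = {M. is_matching E M}"
      unfolding is_matching_def by auto
  next
    fix M assume "M \<in> {M. is_matching E M}"
    then have mM: "is_matching E M" by simp
    define U where "U = \<Union>M"
    define A where "A = V1 - U"
    have cU: "card U = 2 * card M" and UV: "U \<subseteq> V1"
      using matching_card_Union[OF sg mM] unfolding U_def V1_def by auto
    have fV: "finite V1" "finite A" "finite U" using UV by (auto simp: V1_def A_def intro: finite_subset)
    have bij: "bij_betw (\<lambda>T. U \<union> T) (Pow A) {S. S \<in> Pow V1 \<and> U \<subseteq> S}"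
      by (rule bij_betw_byWitness[where f'="\<lambda>S. S - U"]) (use UV in \<open>auto simp: A_def\<close>)
    have "(\<Sum>S | S \<in> Pow V1 \<and> U \<subseteq> S. g S M) = (\<Sum>T\<in>Pow A. g (U \<union> T) M)"
      by (rule sum.reindex_bij_betw[OF bij, symmetric])
    also have "\<dots> = (\<Sum>T\<in>Pow A. Polynomial.smult (d M) (monom ((-1) ^ card (A - T) * (\<Prod>v\<in>A - T. w1 v)) (card T)))"
    proof (intro sum.cong refl)
      fix T assume "T \<in> Pow A"
      then have TA: "T \<subseteq> A" by simp
      have "card (U \<union> T) = card U + card T"
        using TA fV by (intro card_Un_disjoint) (auto simp: A_def intro: finite_subset)
      moreover have "V1 - (U \<union> T) = A - T" by (auto simp: A_def)
      ultimately show "g (U \<union> T) M = Polynomial.smult (d M) (monom ((-1) ^ card (A - T) * (\<Prod>v\<in>A - T. w1 v)) (card T))"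
        unfolding g_def c_def using cU by (simp add: smult_monom mult_ac)
    qed
    also have "\<dots> = Polynomial.smult (d M) (\<Prod>v\<in>A. [:-w1 v, 1:])"
      by (simp add: prod_linear_expand[OF fV(2)] smult_sum2)
    finally show "(\<Sum>S | S \<in> Pow V1 \<and> \<Union>M \<subseteq> S. g S M) = Polynomial.smult (d M) (\<Prod>v\<in>V1 - \<Union>M. [:-w1 v, 1:])"
      unfolding U_def A_def .
  qed
  finally show ?thesis unfolding V1_def d_def .
qed


definition Mp :: "nat \<Rightarrow> (nat \<Rightarrow> nat) \<Rightarrow> nat set set" where
  "Mp n p = (\<lambda>i. {i+1, p i+1}) ` {i. i < n \<and> p i \<noteq> i}"

definition pt :: "nat set set \<Rightarrow> nat \<Rightarrow> nat" where
  "pt M i = (if (\<exists>j. {i+1, j+1} \<in> M) then (THE j. {i+1, j+1} \<in> M) else i)"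

lemma edge_form:
  assumes "simple_graph n E" "e \<in> E"
  shows "\<exists>a b. e = {a+1, b+1} \<and> a \<noteq> b \<and> a < n \<and> b < n"
proof -
  have "e \<subseteq> {1..n}" "card e = 2" using assms unfolding simple_graph_def by auto
  then obtain x y where "e = {x, y}" "x \<noteq> y" "1 \<le> x" "x \<le> n" "1 \<le> y" "y \<le> n"
    by (auto simp: card_2_iff)
  then show ?thesis by (intro exI[of _ "x - 1"] exI[of _ "y - 1"]) auto
qed

lemma edge_ne:
  assumes "simple_graph n E" "{a, b} \<in> E" shows "a \<noteq> b" "a \<le> n" "b \<le> n" "1 \<le> a" "1 \<le> b"
  using assms unfolding simple_graph_def by fastforce+

lemma pt_eq:
  assumes sg: "simple_graph n E" and m: "is_matching E M" and e: "{i+1, j+1} \<in> M"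
  shows "pt M i = j"
proof -
  have ME: "M \<subseteq> E" and dj: "\<forall>e\<in>M. \<forall>f\<in>M. e \<noteq> f \<longrightarrow> e \<inter> f = {}"
    using m unfolding is_matching_def by auto
  have "(THE j. {i+1, j+1} \<in> M) = j"
  proof (rule the_equality)
    show "{i+1, j+1} \<in> M" by (fact e)
  next
    fix j' assume e': "{i+1, j'+1} \<in> M"
    have ne: "{i+1, j'+1} \<inter> {i+1, j+1} \<noteq> {}" by simp
    have "{i+1, j'+1} = {i+1, j+1}"
    proof (rule ccontr)
      assume "{i+1, j'+1} \<noteq> {i+1, j+1}"
      then have "{i+1, j'+1} \<inter> {i+1, j+1} = {}" using dj e e' by metis
      then show False using ne by simp
    qed
    moreover have "{i+1, j+1} \<in> E" using e ME by blast
    then have "i \<noteq> j" using edge_ne(1)[OF sg] by fastforce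
    ultimately show "j' = j" by (auto simp: doubleton_eq_iff)
  qed
  then show ?thesis using e unfolding pt_def by auto
qed

lemma pt_none: "\<not> (\<exists>j. {i+1, j+1} \<in> M) \<Longrightarrow> pt M i = i"
  unfolding pt_def by auto

lemma pt_props:
  assumes sg: "simple_graph n E" and m: "is_matching E M"
  shows "\<forall>x. pt M (pt M x) = x" "pt M permutes {0..<n}" "adm n E (pt M)" "Mp n (pt M) = M"
proof -
  have ME: "M \<subseteq> E" using m unfolding is_matching_def by auto
  show inv: "\<forall>x. pt M (pt M x) = x"
  proof
    fix x show "pt M (pt M x) = x"
    proof (cases "\<exists>j. {x+1, j+1} \<in> M")
      case True
      then obtain j where j: "{x+1, j+1} \<in> M" by blast
      then have "{j+1, x+1} \<in> M" by (simp add: insert_commute)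
      then show ?thesis using pt_eq[OF sg m j] pt_eq[OF sg m] by simp
    next
      case False then show ?thesis by (simp add: pt_none)
    qed
  qed
  have out: "pt M x = x" if "x \<notin> {0..<n}" for x
  proof (rule pt_none, rule notI)
    assume "\<exists>j. {x+1, j+1} \<in> M"
    then obtain j where "{x+1, j+1} \<in> E" using ME by blast
    then show False using edge_ne[OF sg] that by fastforce
  qed
  show "pt M permutes {0..<n}"
    unfolding permutes_def using out inv by metis
  show "adm n E (pt M)"
    unfolding adm_def
  proof (intro allI impI)
    fix i assume "i < n" "pt M i \<noteq> i"
    then obtain j where j: "{i+1, j+1} \<in> M" using pt_none by metis
    then show "{i+1, pt M i + 1} \<in> E" using pt_eq[OF sg m j] ME by auto
  qed
  show "Mp n (pt M) = M"
  proof
    show "Mp n (pt M) \<subseteq> M"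
      unfolding Mp_def
    proof
      fix e assume "e \<in> (\<lambda>i. {i+1, pt M i+1}) ` {i. i < n \<and> pt M i \<noteq> i}"
      then obtain i where i: "pt M i \<noteq> i" "e = {i+1, pt M i+1}" by blast
      then obtain j where j: "{i+1, j+1} \<in> M" using pt_none by metis
      then show "e \<in> M" using pt_eq[OF sg m j] i by simp
    qed
  next
    show "M \<subseteq> Mp n (pt M)"
    proof
      fix e assume eM: "e \<in> M"
      then obtain a b where ab: "e = {a+1, b+1}" "a \<noteq> b" "a < n" "b < n"
        using edge_form[OF sg] ME by blast
      then have "pt M a = b" using pt_eq[OF sg m] eM by simp
      then show "e \<in> Mp n (pt M)" unfolding Mp_def using ab by auto
    qed
  qed
qed


lemma prod_fiber2:
  fixes h :: "nat set \<Rightarrow> 'a::comm_monoid_mult" and p :: "nat \<Rightarrow> nat"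
  assumes inv: "\<forall>x. p (p x) = x" and fin: "finite Mv" and Mv: "\<And>i. i \<in> Mv \<Longrightarrow> p i \<noteq> i \<and> p i \<in> Mv"
  shows "(\<Prod>i\<in>Mv. h {i+1, p i+1}) = (\<Prod>e\<in>(\<lambda>i. {i+1, p i+1}) ` Mv. h e * h e)"
proof -
  have fib: "{j \<in> Mv. {j+1, p j+1} = {i+1, p i+1}} = {i, p i}" if "i \<in> Mv" for i
  proof -
    have "{j+1, p j+1} = {i+1, p i+1} \<longleftrightarrow> j = i \<or> j = p i" for j
      using inv by (auto simp: doubleton_eq_iff)
    then show ?thesis using that Mv by auto
  qed
  have "(\<Prod>i\<in>Mv. h {i+1, p i+1}) = (\<Prod>e\<in>(\<lambda>i. {i+1, p i+1}) ` Mv. \<Prod>j\<in>{j \<in> Mv. {j+1, p j+1} = e}. h {j+1, p j+1})"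
    by (rule prod.image_gen[OF fin])
  also have "\<dots> = (\<Prod>e\<in>(\<lambda>i. {i+1, p i+1}) ` Mv. h e * h e)"
  proof (rule prod.cong[OF refl])
    fix e assume "e \<in> (\<lambda>i. {i+1, p i+1}) ` Mv"
    then obtain i where i: "i \<in> Mv" "e = {i+1, p i+1}" by blast
    have "p i \<noteq> i" using Mv i by blast
    have e2: "{p i + 1, p (p i) + 1} = e" using inv i by (simp add: insert_commute)
    show "(\<Prod>j\<in>{j \<in> Mv. {j+1, p j+1} = e}. h {j+1, p j+1}) = h e * h e"
      unfolding i(2) fib[OF i(1)] using \<open>p i \<noteq> i\<close> e2 i(2) by simp
  qed
  finally show ?thesis .
qed

lemma card_fiber2:
  fixes p :: "nat \<Rightarrow> nat"
  assumes inv: "\<forall>x. p (p x) = x" and fin: "finite Mv" and Mv: "\<And>i. i \<in> Mv \<Longrightarrow> p i \<noteq> i \<and> p i \<in> Mv"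
  shows "card Mv = 2 * card ((\<lambda>i. {i+1, p i+1}) ` Mv)"
proof -
  have "(2::nat) ^ card Mv = (\<Prod>i\<in>Mv. (\<lambda>_. 2) {i+1, p i+1})" by simp
  also have "\<dots> = (\<Prod>e\<in>(\<lambda>i. {i+1, p i+1}) ` Mv. 2 * 2)"
    by (rule prod_fiber2[OF inv fin Mv])
  also have "\<dots> = 2 ^ (2 * card ((\<lambda>i. {i+1, p i+1}) ` Mv))"
    by (simp add: power_mult)
  finally show ?thesis by simp
qed


definition FM :: "nat \<Rightarrow> (nat set \<Rightarrow> real) \<Rightarrow> (nat \<Rightarrow> real) \<Rightarrow> nat set set \<Rightarrow> real poly" where
  "FM n w w1 M = Polynomial.smult ((-1) ^ card M * \<bar>\<Prod>e\<in>M. w e\<bar> ^ 2) (\<Prod>v\<in>{1..n} - \<Union>M. [:-w1 v, 1:])"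

lemma Mp_props:
  assumes sg: "simple_graph n E" and pp: "p permutes {0..<n}" and inv: "\<forall>x. p (p x) = x"
    and ad: "adm n E p"
  shows "is_matching E (Mp n p)" "pt (Mp n p) = p" "tm n E w w1 p = FM n w w1 (Mp n p)"
proof -
  define Mv where "Mv = {i. i < n \<and> p i \<noteq> i}"
  define Fx where "Fx = {i. i < n \<and> p i = i}"
  have out: "p x = x" if "x \<ge> n" for x using permutes_not_in[OF pp] that by simp
  have pin: "p x < n" if "x < n" for x using permutes_in_image[OF pp, of x] that by simp
  have Mv: "p i \<noteq> i \<and> p i \<in> Mv" if "i \<in> Mv" for i
  proof -
    from that have "i < n" "p i \<noteq> i" by (auto simp: Mv_def)
    moreover have "p (p i) \<noteq> p i" using inv \<open>p i \<noteq> i\<close> by simp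
    ultimately show ?thesis using pin unfolding Mv_def by simp
  qed
  have finMv: "finite Mv" unfolding Mv_def by simp
  show m: "is_matching E (Mp n p)"
    unfolding is_matching_def
  proof (intro conjI ballI impI)
    show "Mp n p \<subseteq> E" using ad unfolding Mp_def adm_def by auto
  next
    fix e f assume "e \<in> Mp n p" "f \<in> Mp n p" "e \<noteq> f"
    then obtain a b where ab: "e = {a+1, p a+1}" "f = {b+1, p b+1}" unfolding Mp_def by blast
    have "p (p a) = a" "p (p b) = b" using inv by auto
    then show "e \<inter> f = {}" using ab \<open>e \<noteq> f\<close> by (auto simp: doubleton_eq_iff)
  qed
  show "pt (Mp n p) = p"
  proof
    fix i show "pt (Mp n p) i = p i"
    proof (cases "p i = i")
      case False
      then have "i < n" using out by (meson not_less)
      then have "{i+1, p i+1} \<in> Mp n p" using False unfolding Mp_def by auto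
      then show ?thesis by (rule pt_eq[OF sg m])
    next
      case True
      have "\<not> (\<exists>j. {i+1, j+1} \<in> Mp n p)"
      proof
        assume "\<exists>j. {i+1, j+1} \<in> Mp n p"
        then obtain j k where k: "p k \<noteq> k" "{i+1, j+1} = {k+1, p k+1}" unfolding Mp_def by blast
        then have "i = k \<or> i = p k" by (auto simp: doubleton_eq_iff)
        then show False using k True inv by auto
      qed
      then show ?thesis using True by (simp add: pt_none)
    qed
  qed
  have MpMv: "Mp n p = (\<lambda>i. {i+1, p i+1}) ` Mv" unfolding Mp_def Mv_def by simp
  have cardMv: "card Mv = 2 * card (Mp n p)"
    unfolding MpMv by (rule card_fiber2[OF inv finMv Mv])
  have prodMv: "(\<Prod>i\<in>Mv. w {i+1, p i+1}) = (\<Prod>e\<in>Mp n p. w e) ^ 2"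
    unfolding MpMv by (simp only: prod_fiber2[OF inv finMv Mv] power2_eq_square prod.distrib)
  have supp: "{x. p x \<noteq> x} = Mv" unfolding Mv_def using out by (auto simp: not_less[symmetric])
  have sgn: "sign p = (-1) ^ card (Mp n p)"
    using sign_invol[of p] inv finMv unfolding supp cardMv by simp
  have c1: "of_int (sign p) * (\<Prod>i\<in>Mv. - w {i+1, p i+1}) = (-1) ^ card (Mp n p) * \<bar>\<Prod>e\<in>Mp n p. w e\<bar> ^ 2"
    unfolding prod_neg prodMv sgn cardMv by (simp add: power_mult)
  have VF: "{1..n} - \<Union>(Mp n p) = Suc ` Fx"
  proof
    show "{1..n} - \<Union>(Mp n p) \<subseteq> Suc ` Fx"
    proof
      fix v assume v: "v \<in> {1..n} - \<Union>(Mp n p)"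
      then have "v - 1 < n" "v = Suc (v - 1)" by auto
      moreover have "p (v - 1) = v - 1"
      proof (rule ccontr)
        assume "p (v - 1) \<noteq> v - 1"
        then have "{v - 1 + 1, p (v - 1) + 1} \<in> Mp n p" using \<open>v - 1 < n\<close> unfolding Mp_def by auto
        then show False using v by auto
      qed
      ultimately show "v \<in> Suc ` Fx" unfolding Fx_def by blast
    qed
  next
    show "Suc ` Fx \<subseteq> {1..n} - \<Union>(Mp n p)"
    proof
      fix v assume "v \<in> Suc ` Fx"
      then obtain i where i: "v = Suc i" "i < n" "p i = i" unfolding Fx_def by blast
      have "v \<notin> \<Union>(Mp n p)"
      proof
        assume "v \<in> \<Union>(Mp n p)"
        then obtain k where "p k \<noteq> k" "v \<in> {k+1, p k+1}" unfolding Mp_def by blast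
        then show False using i inv by auto
      qed
      then show "v \<in> {1..n} - \<Union>(Mp n p)" using i by auto
    qed
  qed
  have c2: "(\<Prod>v\<in>{1..n} - \<Union>(Mp n p). [:-w1 v, 1:]) = (\<Prod>i\<in>Fx. [:-w1 (i+1), 1:])"
    unfolding VF by (subst prod.reindex) auto
  show "tm n E w w1 p = FM n w w1 (Mp n p)"
    unfolding tm_adm[OF ad] FM_def c2 Mv_def[symmetric] Fx_def[symmetric] c1 ..
qed


lemma eta_invol:
  assumes sg: "simple_graph n E"
  shows "eta_poly n E w w1 = (\<Sum>p | p permutes {0..<n} \<and> (\<forall>x. p (p x) = x). tm n E w w1 p)"
proof -
  define IA where "IA = {p. p permutes {0..<n} \<and> (\<forall>x. p (p x) = x) \<and> adm n E p}"
  have fin: "finite {p. p permutes {0..<n} \<and> (\<forall>x. p (p x) = x)}"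
    by (rule finite_subset[OF _ finite_permutations[of "{0..<n}"]]) auto
  have "(\<Sum>p | p permutes {0..<n} \<and> (\<forall>x. p (p x) = x). tm n E w w1 p) = (\<Sum>p\<in>IA. tm n E w w1 p)"
    by (rule sum.mono_neutral_right[OF fin]) (auto simp: IA_def tm_nonadm)
  also have "\<dots> = (\<Sum>p\<in>IA. FM n w w1 (Mp n p))"
    by (rule sum.cong[OF refl]) (auto simp: IA_def Mp_props(3)[OF sg])
  also have "\<dots> = (\<Sum>M | is_matching E M. FM n w w1 M)"
  proof (rule sum.reindex_bij_betw)
    show "bij_betw (Mp n) IA {M. is_matching E M}"
    proof (rule bij_betw_byWitness[where f'=pt])
      show "\<forall>p\<in>IA. pt (Mp n p) = p" by (auto simp: IA_def Mp_props(2)[OF sg])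
      show "\<forall>M\<in>{M. is_matching E M}. Mp n (pt M) = M" by (auto simp: pt_props(4)[OF sg])
      show "Mp n ` IA \<subseteq> {M. is_matching E M}" by (auto simp: IA_def Mp_props(1)[OF sg])
      show "pt ` {M. is_matching E M} \<subseteq> IA" using pt_props(1-3)[OF sg] by (auto simp: IA_def)
    qed
  qed
  finally show ?thesis unfolding eta_matchings[OF sg] FM_def by simp
qed


lemma orbit_cycle:
  assumes sg: "simple_graph n E" and pp: "p permutes {0..<n}" and ad: "adm n E p"
    and np: "p (p i) \<noteq> i"
  shows "is_cycle n E (map Suc (support p i))"
    and "set (support p i) \<subseteq> {x. x < n \<and> p x \<noteq> x}"
    and "set (support p i) = {x. x < n \<and> p x \<noteq> x} \<Longrightarrow> p = cycle_of_list (support p i)"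
proof -
  define L where "L = least_power p i"
  define cs where "cs = support p i"
  have perm: "permutation p" by (rule permutes_imp_permutation[OF _ pp]) simp
  have PL: "(p ^^ L) i = i" "L > 0" using least_power_of_permutation[OF perm] unfolding L_def by auto
  have out: "p x = x" if "\<not> x < n" for x using permutes_not_in[OF pp] that by simp
  have "i < n" using np out by metis
  have pin: "((p ^^ k) i) < n" for k
    by (induction k) (use \<open>i < n\<close> permutes_in_image[OF pp] in auto)
  have "p i \<noteq> i" using np by auto
  then have "L > 1" using least_power_gt_one[OF perm] unfolding L_def by simp
  moreover have "L \<noteq> 2"
  proof
    assume "L = 2" then have "(p ^^ 2) i = i" using PL by simp
    then show False using np by (simp add: numeral_2_eq_2)
  qed
  ultimately have L3: "L \<ge> 3" by linarith
  have lencs: "length cs = L" unfolding cs_def L_def by simp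
  have nth: "cs ! k = (p ^^ k) i" if "k < L" for k unfolding cs_def L_def using that L_def by simp
  have dist: "distinct cs" unfolding cs_def by (rule cycle_of_permutation[OF perm])
  have nxt: "p (cs ! k) = cs ! ((k + 1) mod L)" if "k < L" for k
  proof (cases "Suc k < L")
    case True then show ?thesis using nth that by simp
  next
    case False then have "Suc k = L" using that by simp
    have "p (cs ! k) = (p ^^ Suc k) i" using nth that by simp
    also have "\<dots> = cs ! 0" using \<open>Suc k = L\<close> PL nth by simp
    finally show ?thesis using \<open>Suc k = L\<close> by simp
  qed
  have mv: "p (cs ! k) \<noteq> cs ! k" if "k < L" for k
  proof -
    have "(k + 1) mod L \<noteq> k"
    proof (cases "Suc k < L")
      case True then show ?thesis by simp
    next
      case False then have "Suc k = L" using that by simp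
      then show ?thesis using L3 by simp
    qed
    moreover have "(k + 1) mod L < L" using PL by simp
    ultimately show ?thesis unfolding nxt[OF that] using dist that lencs by (simp add: nth_eq_iff_index_eq)
  qed
  have setcs: "set cs = {cs ! k | k. k < L}" using lencs by (auto simp: in_set_conv_nth)
  show sub: "set (support p i) \<subseteq> {x. x < n \<and> p x \<noteq> x}"
    unfolding cs_def[symmetric] setcs using mv nth pin by auto
  show "is_cycle n E (map Suc (support p i))"
    unfolding is_cycle_def cs_def[symmetric]
  proof (intro conjI allI impI)
    show "3 \<le> length (map Suc cs)" using L3 lencs by simp
    show "distinct (map Suc cs)" using dist by (simp add: distinct_map)
    show "set (map Suc cs) \<subseteq> {1..n}" using sub unfolding cs_def[symmetric] by auto
  next
    fix k assume k: "k < length (map Suc cs)"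
    then have kL: "k < L" using lencs by simp
    have "(k + 1) mod L < L" using PL by simp
    then have "map Suc cs ! ((k + 1) mod length (map Suc cs)) = p (cs ! k) + 1"
      using nxt[OF kL] lencs by simp
    moreover have "map Suc cs ! k = cs ! k + 1" using kL lencs by simp
    moreover have "cs ! k < n" using nth kL pin by simp
    ultimately show "{map Suc cs ! k, map Suc cs ! ((k + 1) mod length (map Suc cs))} \<in> E"
      using ad mv[OF kL] unfolding adm_def by simp
  qed
  show "p = cycle_of_list (support p i)" if eq: "set (support p i) = {x. x < n \<and> p x \<noteq> x}"
  proof
    fix x show "p x = cycle_of_list (support p i) x"
    proof (cases "x \<in> set (support p i)")
      case True then show ?thesis by (rule cycle_restrict[OF perm])
    next
      case False
      then have "p x = x" using eq out by auto
      then show ?thesis using id_outside_supp[OF False] by simp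
    qed
  qed
qed


lemma phi_minus_eta:
  assumes sg: "simple_graph n E"
  shows "phi_poly n E w w1 - eta_poly n E w w1 =
    (\<Sum>p | p permutes {0..<n} \<and> \<not> (\<forall>x. p (p x) = x). tm n E w w1 p)"
proof -
  define A where "A = {p. p permutes {0..<n} \<and> (\<forall>x. p (p x) = x)}"
  define B where "B = {p. p permutes {0..<n} \<and> \<not> (\<forall>x. p (p x) = x)}"
  have fin: "finite {p. p permutes {0..<n}}" by (rule finite_permutations) simp
  have AB: "{p. p permutes {0..<n}} = A \<union> B" unfolding A_def B_def by auto
  have fA: "finite A" using fin AB by (metis finite_Un)
  have fB: "finite B" using fin AB by (metis finite_Un)
  have dAB: "A \<inter> B = {}" unfolding A_def B_def by auto
  have "phi_poly n E w w1 = sum (tm n E w w1) (A \<union> B)" unfolding phi_sum AB ..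
  also have "\<dots> = sum (tm n E w w1) A + sum (tm n E w w1) B" by (rule sum.union_disjoint[OF fA fB dAB])
  finally show ?thesis unfolding eta_invol[OF sg] A_def B_def by simp
qed


lemma forest_eq:
  assumes sg: "simple_graph n E" and fo: "is_forest n E"
  shows "phi_poly n E w w1 = eta_poly n E w w1"
proof -
  have "(\<Sum>p | p permutes {0..<n} \<and> \<not> (\<forall>x. p (p x) = x). tm n E w w1 p) = 0"
  proof (rule sum.neutral, rule ballI)
    fix p assume "p \<in> {p. p permutes {0..<n} \<and> \<not> (\<forall>x. p (p x) = x)}"
    then obtain i where pp: "p permutes {0..<n}" and np: "p (p i) \<noteq> i" by auto
    show "tm n E w w1 p = 0"
    proof (cases "adm n E p")
      case True
      then have "is_cycle n E (map Suc (support p i))" using orbit_cycle(1)[OF sg pp _ np] by blast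
      then show ?thesis using fo unfolding is_forest_def by blast
    next
      case False then show ?thesis by (rule tm_nonadm)
    qed
  qed
  then show ?thesis using phi_minus_eta[OF sg, of w w1] by simp
qed

lemma monic_prod_deg:
  fixes c :: "nat \<Rightarrow> real"
  assumes "finite A"
  shows "degree (\<Prod>i\<in>A. [:c i, 1:]) = card A" "coeff (\<Prod>i\<in>A. [:c i, 1:]) (card A) = 1"
proof -
  have "degree (\<Prod>i\<in>A. [:c i, 1:]) = (\<Sum>i\<in>A. degree [:c i, 1:])"
    by (rule degree_prod_eq_sum_degree) auto
  then show d: "degree (\<Prod>i\<in>A. [:c i, 1:]) = card A" by simp
  have "lead_coeff (\<Prod>i\<in>A. [:c i, 1:]) = 1" by (simp add: lead_coeff_prod)
  then show "coeff (\<Prod>i\<in>A. [:c i, 1:]) (card A) = 1" using d by simp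
qed

lemma tm_coeff:
  assumes sg: "simple_graph n E" and pp: "p permutes {0..<n}" and ad: "adm n E p"
    and np: "p (p i) \<noteq> i" and gmin: "\<forall>vs. is_cycle n E vs \<longrightarrow> g \<le> length vs"
  shows "g \<le> card {x. x < n \<and> p x \<noteq> x}"
    and "coeff (tm n E w w1 p) (n - g) = (if card {x. x < n \<and> p x \<noteq> x} = g
           then - (\<Prod>x\<in>{x. x < n \<and> p x \<noteq> x}. w {x+1, p x+1}) else 0)"
proof -
  define Mv where "Mv = {x. x < n \<and> p x \<noteq> x}"
  define Fx where "Fx = {x. x < n \<and> p x = x}"
  define cs where "cs = support p i"
  have cyc: "is_cycle n E (map Suc cs)" unfolding cs_def by (rule orbit_cycle(1)[OF sg pp ad np])
  have sub: "set cs \<subseteq> Mv" unfolding cs_def Mv_def by (rule orbit_cycle(2)[OF sg pp ad np])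
  have dist: "distinct cs" using cyc unfolding is_cycle_def by (simp add: distinct_map)
  have glen: "g \<le> length cs" using gmin cyc by force
  have len3: "3 \<le> length cs" using cyc unfolding is_cycle_def by simp
  have fMv: "finite Mv" unfolding Mv_def by simp
  have lc: "length cs \<le> card Mv" using card_mono[OF fMv sub] distinct_card[OF dist] by simp
  show gM: "g \<le> card {x. x < n \<and> p x \<noteq> x}" using glen lc unfolding Mv_def by simp
  have cF: "card Fx = n - card Mv"
  proof -
    have "{0..<n} = Fx \<union> Mv" "Fx \<inter> Mv = {}" unfolding Fx_def Mv_def by auto
    then have "card Fx + card Mv = n" using card_Un_disjoint[of Fx Mv] by (metis card_atLeastLessThan diff_zero finite_Un finite_atLeastLessThan)
    then show ?thesis by simp
  qed
  have fFx: "finite Fx" unfolding Fx_def by simp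
  define c where "c = of_int (sign p) * (\<Prod>x\<in>Mv. - w {x+1, p x+1})"
  have tm: "tm n E w w1 p = Polynomial.smult c (\<Prod>x\<in>Fx. [:-w1(x+1), 1:])"
    unfolding tm_adm[OF ad] c_def Mv_def Fx_def ..
  have key: "coeff (tm n E w w1 p) (n - g) = (if card Mv = g
           then - (\<Prod>x\<in>Mv. w {x+1, p x+1}) else 0)"
  proof (cases "card Mv = g")
    case False
    then have "card Mv > g" using gM unfolding Mv_def by simp
    moreover have "card Mv \<le> n" unfolding Mv_def by (rule order.trans[OF card_mono[of "{0..<n}"]]) auto
    ultimately have "n - g > degree (\<Prod>x\<in>Fx. [:-w1(x+1), 1:])"
      using monic_prod_deg(1)[OF fFx, of "\<lambda>x. - w1 (x+1)"] cF by simp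
    then show ?thesis using False unfolding tm by (simp add: coeff_eq_0)
  next
    case True
    then have "set cs = Mv" using card_subset_eq[OF fMv sub] lc glen distinct_card[OF dist] by simp
    then have pc: "p = cycle_of_list cs" unfolding cs_def Mv_def by (rule orbit_cycle(3)[OF sg pp ad np])
    have lg: "length cs = g" using \<open>set cs = Mv\<close> True distinct_card[OF dist] by simp
    have sg': "sign p = (-1) ^ (g - 1)" proof -
      have "cs \<noteq> []" using len3 by auto
      then show ?thesis unfolding pc using sign_cycle_of_list[OF dist] lg by simp
    qed
    have "c = (-1) ^ (g - 1) * (-1) ^ g * (\<Prod>x\<in>Mv. w {x+1, p x+1})"
      unfolding c_def sg' prod_neg True by simp
    also have "(-1) ^ (g - 1) * (-1) ^ g = (-1 :: real)"
    proof -
      have "(-1) ^ (g - 1) * (-1) ^ g = (-1 :: real) ^ (g - 1 + g)" by (simp add: power_add)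
      also have "g - 1 + g = Suc (2 * (g - 1))" using lg len3 by simp
      finally show ?thesis by simp
    qed
    finally have c: "c = - (\<Prod>x\<in>Mv. w {x+1, p x+1})" by simp
    have "n - g = card Fx" using cF True by simp
    then show ?thesis using True unfolding tm c
      using monic_prod_deg(2)[OF fFx, of "\<lambda>x. - w1 (x+1)"] by simp
  qed
  then show "coeff (tm n E w w1 p) (n - g) = (if card {x. x < n \<and> p x \<noteq> x} = g
           then - (\<Prod>x\<in>{x. x < n \<and> p x \<noteq> x}. w {x+1, p x+1}) else 0)"
    unfolding Mv_def .
qed


lemma cycle_perm:
  assumes sg: "simple_graph n E" and cyc: "is_cycle n E vs"
  defines "us \<equiv> map (\<lambda>v. v - 1) vs"
  shows "cycle_of_list us permutes {0..<n}" "adm n E (cycle_of_list us)"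
    "cycle_of_list us (cycle_of_list us (us ! 0)) \<noteq> us ! 0"
    "{x. x < n \<and> cycle_of_list us x \<noteq> x} = set us" "card (set us) = length vs"
proof -
  define L where "L = length vs"
  define p0 where "p0 = cycle_of_list us"
  have L3: "3 \<le> L" and dvs: "distinct vs" and svs: "set vs \<subseteq> {1..n}"
    and edg: "\<And>k. k < L \<Longrightarrow> {vs ! k, vs ! ((k + 1) mod L)} \<in> E"
    using cyc unfolding is_cycle_def L_def by auto
  have lus: "length us = L" unfolding us_def L_def by simp
  have ge1: "vs ! k \<ge> 1" "vs ! k \<le> n" if "k < L" for k
  proof -
    have "vs ! k \<in> {1..n}" using svs that nth_mem[of k vs] unfolding L_def by blast
    then show "vs ! k \<ge> 1" "vs ! k \<le> n" by auto
  qed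
  have usk: "us ! k = vs ! k - 1" if "k < L" for k using that unfolding us_def L_def by simp
  have inj: "inj_on (\<lambda>v. v - 1) (set vs)"
  proof (rule inj_onI)
    fix x y assume "x \<in> set vs" "y \<in> set vs" "x - 1 = y - 1"
    moreover have "x \<ge> 1" "y \<ge> 1" using svs \<open>x \<in> set vs\<close> \<open>y \<in> set vs\<close> by auto
    ultimately show "x = y" by simp
  qed
  have dus: "distinct us" unfolding us_def using dvs inj by (simp add: distinct_map)
  have rot: "map p0 us = rotate1 us" unfolding p0_def using cyclic_rotation[OF dus, of 1] by simp
  have nxt: "p0 (us ! k) = us ! (Suc k mod L)" if "k < L" for k
  proof -
    have "p0 (us ! k) = map p0 us ! k" using that lus by simp
    also have "\<dots> = us ! (Suc k mod L)" unfolding rot using that lus by (simp add: nth_rotate1)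
    finally show ?thesis .
  qed
  have sus: "set us \<subseteq> {0..<n}"
  proof
    fix x assume "x \<in> set us"
    then obtain k where "k < L" "x = us ! k" using lus by (auto simp: in_set_conv_nth)
    then show "x \<in> {0..<n}" using usk ge1 by fastforce
  qed
  show "cycle_of_list us permutes {0..<n}"
    by (rule permutes_subset[OF cycle_permutes sus])
  have mv: "p0 (us ! k) \<noteq> us ! k" if "k < L" for k
  proof -
    have "Suc k mod L \<noteq> k"
    proof (cases "Suc k < L")
      case True then show ?thesis by simp
    next
      case False then have "Suc k = L" using that by simp
      then show ?thesis using L3 by simp
    qed
    moreover have "Suc k mod L < L" using L3 by simp
    ultimately show ?thesis unfolding nxt[OF that] using dus that lus by (simp add: nth_eq_iff_index_eq)
  qed
  show "{x. x < n \<and> cycle_of_list us x \<noteq> x} = set us"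
  proof
    show "{x. x < n \<and> cycle_of_list us x \<noteq> x} \<subseteq> set us" using id_outside_supp by fastforce
    show "set us \<subseteq> {x. x < n \<and> cycle_of_list us x \<noteq> x}"
    proof
      fix x assume x: "x \<in> set us"
      then obtain k where "k < L" "x = us ! k" using lus by (auto simp: in_set_conv_nth)
      then show "x \<in> {x. x < n \<and> cycle_of_list us x \<noteq> x}" using mv sus x unfolding p0_def by auto
    qed
  qed
  show "card (set us) = length vs" using distinct_card[OF dus] lus L_def by simp
  show "adm n E (cycle_of_list us)"
    unfolding adm_def
  proof (intro allI impI)
    fix i assume "i < n" "cycle_of_list us i \<noteq> i"
    then have "i \<in> set us" using id_outside_supp by metis
    then obtain k where k: "k < L" "i = us ! k" using lus by (auto simp: in_set_conv_nth)
    have kk: "Suc k mod L < L" using L3 by simp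
    have "{i + 1, cycle_of_list us i + 1} = {vs ! k, vs ! ((k + 1) mod L)}"
      using nxt[OF k(1)] k usk[OF k(1)] usk[OF kk] ge1(1)[OF k(1)] ge1(1)[OF kk] unfolding p0_def by simp
    then show "{i + 1, cycle_of_list us i + 1} \<in> E" using edg[OF k(1)] by simp
  qed
  have "p0 (p0 (us ! 0)) = us ! 2" using nxt L3 by (simp add: numeral_2_eq_2)
  moreover have "us ! 2 \<noteq> us ! 0" using dus L3 lus by (simp add: nth_eq_iff_index_eq)
  ultimately show "cycle_of_list us (cycle_of_list us (us ! 0)) \<noteq> us ! 0" unfolding p0_def by simp
qed


theorem corollary2p10:
  fixes n :: nat and E :: "nat set set" and w :: "nat set \<Rightarrow> real" and w1 :: "nat \<Rightarrow> real"
  assumes "simple_graph n E"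
    and "\<forall>e\<in>E. w e > 0"
  shows "is_forest n E \<longleftrightarrow> phi_poly n E w w1 = eta_poly n E w w1"
proof
  assume "is_forest n E" then show "phi_poly n E w w1 = eta_poly n E w w1"
    by (rule forest_eq[OF assms(1)])
next
  note sg = assms(1) and pos = assms(2)
  assume eq: "phi_poly n E w w1 = eta_poly n E w w1"
  show "is_forest n E"
  proof (rule ccontr)
    assume "\<not> is_forest n E"
    then have ex: "\<exists>k vs. is_cycle n E vs \<and> length vs = k" unfolding is_forest_def by blast
    define g where "g = (LEAST k. \<exists>vs. is_cycle n E vs \<and> length vs = k)"
    obtain vs0 where vs0: "is_cycle n E vs0" "length vs0 = g"
      using LeastI_ex[OF ex] unfolding g_def by blast
    have gmin: "\<forall>vs. is_cycle n E vs \<longrightarrow> g \<le> length vs"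
      unfolding g_def by (auto intro: Least_le)
    define D where "D = {p. p permutes {0..<n} \<and> \<not> (\<forall>x. p (p x) = x)}"
    define f where "f p = coeff (tm n E w w1 p) (n - g)" for p
    have finD: "finite D"
      unfolding D_def by (rule finite_subset[OF _ finite_permutations[of "{0..<n}"]]) auto
    have nonpos: "f p \<le> 0" if "p \<in> D" for p
    proof -
      from that obtain i where pp: "p permutes {0..<n}" and np: "p (p i) \<noteq> i" unfolding D_def by auto
      show ?thesis
      proof (cases "adm n E p")
        case True
        have "(\<Prod>x\<in>{x. x < n \<and> p x \<noteq> x}. w {x+1, p x+1}) > 0"
          using True pos unfolding adm_def by (intro prod_pos) auto
        then show ?thesis unfolding f_def tm_coeff(2)[OF sg pp True np gmin] by simp
      next
        case False then show ?thesis unfolding f_def by (simp add: tm_nonadm)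
      qed
    qed
    define us where "us = map (\<lambda>v. v - 1) vs0"
    define p0 where "p0 = cycle_of_list us"
    have p0: "p0 permutes {0..<n}" "adm n E p0" "p0 (p0 (us ! 0)) \<noteq> us ! 0"
      "{x. x < n \<and> p0 x \<noteq> x} = set us" "card (set us) = length vs0"
      using cycle_perm[OF sg vs0(1)] unfolding p0_def us_def by auto
    have p0D: "p0 \<in> D" unfolding D_def using p0(1,3) by auto
    have neg: "f p0 < 0"
    proof -
      have "(\<Prod>x\<in>{x. x < n \<and> p0 x \<noteq> x}. w {x+1, p0 x+1}) > 0"
        using p0(2) pos unfolding adm_def by (intro prod_pos) auto
      moreover have "card {x. x < n \<and> p0 x \<noteq> x} = g" using p0(4,5) vs0(2) by simp
      ultimately show ?thesis unfolding f_def tm_coeff(2)[OF sg p0(1,2,3) gmin] by simp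
    qed
    have "sum f D = f p0 + sum f (D - {p0})" by (rule sum.remove[OF finD p0D])
    also have "\<dots> < 0" using neg sum_nonpos[of "D - {p0}" f] nonpos by fastforce
    finally have "sum f D < 0" .
    moreover have "sum f D = coeff (phi_poly n E w w1 - eta_poly n E w w1) (n - g)"
      unfolding phi_minus_eta[OF sg] f_def D_def by (simp add: coeff_sum)
    ultimately show False using eq by simp
  qed
qed

end
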